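(* Let $(E,\mathcal{L},g)$ be a uniform affine oriented matroid with $|E|>1$ such that every maximal element of its bounded complex $\mathcal{L}^{++}$ is a tope of $\mathcal{L}$, and such that $X\backslash g\neq 0$ for every $X\in\mathcal{L}^+$. Then for $X\in\mathcal{L}^+$: $X\backslash g\in\mathcal{L}/g$ if and only if $X\notin\mathcal{L}^{++}$.
   Context: An oriented matroid $(E,\mathcal{L})$ is given by covectors $\mathcal{L}\subseteq\{+,-,0\}^E$ satisfying the standard covector axioms, ordered componentwise by $0<+$, $0<-$; topes are maximal covectors. Uniform: the underlying matroid (flats $z(X)=\{e:X_e=0\}$, $X\in\mathcal{L}$) of rank $r$ has every $r$-subset of $E$ as a basis. An affine oriented matroid $(E,\mathcal{L},g)$ has a distinguished non-loop $g\in E$; $\mathcal{L}^+=\{X\in\mathcal{L}:X_g=+\}$; bounded complex $\mathcal{L}^{++}=\{X\in\mathcal{L}^+:\ \text{all } 0\neq Y\le X \text{ in } \mathcal{L} \text{ have } Y_g=+\}$. For a sign vector $X\in\{+,-,0\}^E$, $X\backslash g$ denotes its restriction to $E\setminus\{g\}$. The contraction is $\mathcal{L}/g=\{Y\backslash g: Y\in\mathcal{L},\ Y_g=0\}$, an oriented matroid on $E\setminus\{g\}$. *)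

theory Defs
  imports Main
begin

datatype sign = Pos | Neg | Zero

text \<open>Sign vectors on a ground set E are functions into sign that vanish outside E.\<close>
type_synonym 'e svec = "'e \<Rightarrow> sign"

definition zero_sv :: "'e svec" where "zero_sv = (\<lambda>_. Zero)"

fun neg_sign :: "sign \<Rightarrow> sign" where
  "neg_sign Pos = Neg" | "neg_sign Neg = Pos" | "neg_sign Zero = Zero"

definition neg_sv :: "'e svec \<Rightarrow> 'e svec" where
  "neg_sv X = (\<lambda>e. neg_sign (X e))"

definition comp_sv :: "'e svec \<Rightarrow> 'e svec \<Rightarrow> 'e svec" where
  "comp_sv X Y = (\<lambda>e. if X e \<noteq> Zero then X e else Y e)"

definition sep_set :: "'e svec \<Rightarrow> 'e svec \<Rightarrow> 'e set" where
  "sep_set X Y = {f. X f \<noteq> Zero \<and> Y f = neg_sign (X f)}"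

definition le_sv :: "'e svec \<Rightarrow> 'e svec \<Rightarrow> bool" where
  "le_sv X Y \<longleftrightarrow> (\<forall>e. X e = Zero \<or> X e = Y e)"

definition zset :: "'e svec \<Rightarrow> 'e set" where
  "zset X = {e. X e = Zero}"

definition oriented_matroid :: "'e set \<Rightarrow> 'e svec set \<Rightarrow> bool" where
  "oriented_matroid E L \<longleftrightarrow>
     finite E \<and>
     (\<forall>X\<in>L. \<forall>e. e \<notin> E \<longrightarrow> X e = Zero) \<and>
     zero_sv \<in> L \<and>
     (\<forall>X\<in>L. neg_sv X \<in> L) \<and>
     (\<forall>X\<in>L. \<forall>Y\<in>L. comp_sv X Y \<in> L) \<and>
     (\<forall>X\<in>L. \<forall>Y\<in>L. \<forall>e\<in>sep_set X Y. \<exists>Z\<in>L. Z e = Zero \<and>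
         (\<forall>f. f \<notin> sep_set X Y \<longrightarrow> Z f = comp_sv X Y f))"

definition tope :: "'e svec set \<Rightarrow> 'e svec \<Rightarrow> bool" where
  "tope L T \<longleftrightarrow> T \<in> L \<and> (\<forall>Y\<in>L. le_sv T Y \<longrightarrow> Y = T)"

text \<open>Underlying matroid given by its flats z(X), X in L.\<close>
definition om_closure :: "'e set \<Rightarrow> 'e svec set \<Rightarrow> 'e set \<Rightarrow> 'e set" where
  "om_closure E L A = E \<inter> \<Inter>{zset X | X. X \<in> L \<and> A \<subseteq> zset X}"

definition om_indep :: "'e set \<Rightarrow> 'e svec set \<Rightarrow> 'e set \<Rightarrow> bool" where
  "om_indep E L I \<longleftrightarrow> I \<subseteq> E \<and> (\<forall>e\<in>I. e \<notin> om_closure E L (I - {e}))"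

definition om_basis :: "'e set \<Rightarrow> 'e svec set \<Rightarrow> 'e set \<Rightarrow> bool" where
  "om_basis E L B \<longleftrightarrow> om_indep E L B \<and> (\<forall>e\<in>E - B. \<not> om_indep E L (insert e B))"

definition uniform_om :: "'e set \<Rightarrow> 'e svec set \<Rightarrow> bool" where
  "uniform_om E L \<longleftrightarrow> (\<exists>r. (\<exists>B. om_basis E L B \<and> card B = r) \<and>
       (\<forall>B. B \<subseteq> E \<and> card B = r \<longrightarrow> om_basis E L B))"

definition om_loop :: "'e set \<Rightarrow> 'e svec set \<Rightarrow> 'e \<Rightarrow> bool" where
  "om_loop E L e \<longleftrightarrow> e \<in> om_closure E L {}"

definition affine_om :: "'e set \<Rightarrow> 'e svec set \<Rightarrow> 'e \<Rightarrow> bool" where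
  "affine_om E L g \<longleftrightarrow> oriented_matroid E L \<and> g \<in> E \<and> \<not> om_loop E L g"

definition Lplus :: "'e svec set \<Rightarrow> 'e \<Rightarrow> 'e svec set" where
  "Lplus L g = {X \<in> L. X g = Pos}"

definition Lpp :: "'e svec set \<Rightarrow> 'e \<Rightarrow> 'e svec set" where
  "Lpp L g = {X \<in> Lplus L g. \<forall>Y\<in>L. Y \<noteq> zero_sv \<and> le_sv Y X \<longrightarrow> Y g = Pos}"

text \<open>Restriction to E - {g}: with the convention that sign vectors vanish outside the ground set.\<close>
definition del_sv :: "'e svec \<Rightarrow> 'e \<Rightarrow> 'e svec" where
  "del_sv X g = X(g := Zero)"

definition contraction :: "'e svec set \<Rightarrow> 'e \<Rightarrow> 'e svec set" where
  "contraction L g = {del_sv Y g | Y. Y \<in> L \<and> Y g = Zero}"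

end

theory Submission
  imports Defs
begin

lemma cl_iff:
  "e \<in> om_closure E L A \<longleftrightarrow> e \<in> E \<and> (\<forall>X\<in>L. A \<subseteq> zset X \<longrightarrow> X e = Zero)"
  unfolding om_closure_def zset_def by blast

lemma indep_mono:
  assumes "om_indep E L I" "J \<subseteq> I"
  shows "om_indep E L J"
  using assms unfolding om_indep_def cl_iff by (meson Diff_mono order_refl subset_trans subsetD)

lemma realize:
  assumes om: "oriented_matroid E L" and ind: "om_indep E L I"
  shows "\<exists>V\<in>L. \<forall>f\<in>I. V f = W f"
proof -
  have finI: "finite I" using om ind unfolding oriented_matroid_def om_indep_def
    using finite_subset by blast
  have "finite F \<Longrightarrow> F \<subseteq> I \<Longrightarrow> \<exists>V\<in>L. (\<forall>f\<in>F. V f = W f) \<and> (\<forall>f\<in>I-F. V f = Zero)" for F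
  proof (induction F rule: finite_induct)
    case empty
    then show ?case using om unfolding oriented_matroid_def zero_sv_def by auto
  next
    case (insert a J)
    then obtain V where V: "V \<in> L" "\<forall>f\<in>J. V f = W f" "\<forall>f\<in>I-J. V f = Zero" by auto
    have aI: "a \<in> I" using insert by auto
    have aE: "a \<in> E" using aI ind unfolding om_indep_def by auto
    have "a \<notin> om_closure E L (I - {a})" using aI ind unfolding om_indep_def by auto
    then obtain U where U: "U \<in> L" "I - {a} \<subseteq> zset U" "U a \<noteq> Zero"
      using aE unfolding cl_iff by auto
    show ?case
    proof (cases "W a = Zero")
      case True
      then show ?thesis using V insert by auto
    next
      case False
      obtain U' where U': "U' \<in> L" "U' a = W a" "\<forall>f\<in>I-{a}. U' f = Zero"
      proof (cases "U a = W a")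
        case True then show ?thesis using that U unfolding zset_def by auto
      next
        case False
        have "neg_sv U \<in> L" using om U unfolding oriented_matroid_def by auto
        moreover have "neg_sv U a = W a" using False \<open>W a \<noteq> Zero\<close> U(3)
          unfolding neg_sv_def by (cases "U a"; cases "W a") auto
        moreover have "\<forall>f\<in>I-{a}. neg_sv U f = Zero" using U(2) unfolding zset_def neg_sv_def by auto
        ultimately show ?thesis using that by blast
      qed
      have "comp_sv V U' \<in> L" using om V U' unfolding oriented_matroid_def by auto
      moreover have "\<forall>f\<in>insert a J. comp_sv V U' f = W f"
        using V U' insert aI unfolding comp_sv_def by auto
      moreover have "\<forall>f\<in>I - insert a J. comp_sv V U' f = Zero"
        using V U' insert aI unfolding comp_sv_def by auto
      ultimately show ?thesis by blast
    qed
  qed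
  from this[OF finI] show ?thesis by auto
qed

lemma size_bound:
  assumes om: "oriented_matroid E L"
    and bases: "\<forall>B. B \<subseteq> E \<and> card B = r \<longrightarrow> om_basis E L B"
    and Y: "Y \<in> L" "e \<in> E" "Y e \<noteq> Zero"
    and B: "B \<subseteq> zset Y" "B \<subseteq> E" "card B = r"
  shows False
proof -
  have bas: "om_basis E L B" using bases B by auto
  have eB: "e \<notin> B" using Y B unfolding zset_def by auto
  have "\<not> om_indep E L (insert e B)" using bas eB Y unfolding om_basis_def by auto
  then obtain c where c: "c \<in> insert e B" "c \<in> om_closure E L (insert e B - {c})"
    using B Y unfolding om_indep_def by blast
  have ce: "c \<noteq> e"
  proof
    assume "c = e"
    then have "e \<in> om_closure E L B" using c eB by simp
    then show False using Y B unfolding cl_iff by auto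
  qed
  then have cB: "c \<in> B" using c by auto
  have "c \<notin> om_closure E L (B - {c})" using bas cB unfolding om_basis_def om_indep_def by auto
  then obtain U where U: "U \<in> L" "B - {c} \<subseteq> zset U" "U c \<noteq> Zero"
    using cB B unfolding cl_iff by auto
  have cl2: "\<forall>X\<in>L. insert e (B - {c}) \<subseteq> zset X \<longrightarrow> X c = Zero"
  proof -
    have "insert e B - {c} = insert e (B - {c})" using ce by auto
    then show ?thesis using c(2) unfolding cl_iff by simp
  qed
  have Ue: "U e \<noteq> Zero"
  proof
    assume "U e = Zero"
    then have "insert e (B - {c}) \<subseteq> zset U" using U unfolding zset_def by auto
    then show False using cl2 U by auto
  qed
  obtain Y' where Y': "Y' \<in> L" "Y' e = neg_sign (U e)" "B \<subseteq> zset Y'"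
  proof (cases "Y e = neg_sign (U e)")
    case True then show ?thesis using that Y B by auto
  next
    case False
    have "neg_sv Y \<in> L" using om Y unfolding oriented_matroid_def by auto
    moreover have "neg_sv Y e = neg_sign (U e)" using False Ue Y(3)
      unfolding neg_sv_def by (cases "U e"; cases "Y e") auto
    moreover have "B \<subseteq> zset (neg_sv Y)" using B(1) unfolding zset_def neg_sv_def by auto
    ultimately show ?thesis using that by blast
  qed
  have esep: "e \<in> sep_set U Y'" using Ue Y' unfolding sep_set_def by auto
  then obtain Z where Z: "Z \<in> L" "Z e = Zero" "\<forall>f. f \<notin> sep_set U Y' \<longrightarrow> Z f = comp_sv U Y' f"
    using om U Y' unfolding oriented_matroid_def by blast
  have Y'c: "Y' c = Zero" using Y'(3) cB unfolding zset_def by auto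
  have "c \<notin> sep_set U Y'" using Y'c U(3) unfolding sep_set_def by (cases "U c") auto
  then have Zc: "Z c = U c" using Z(3) U(3) unfolding comp_sv_def by simp
  have "f \<in> zset Z" if f: "f \<in> B - {c}" for f
  proof -
    have Uf: "U f = Zero" using U(2) f unfolding zset_def by auto
    have Y'f: "Y' f = Zero" using Y'(3) f unfolding zset_def by auto
    have "f \<notin> sep_set U Y'" using Uf unfolding sep_set_def by simp
    then show ?thesis using Z(3) Uf Y'f unfolding comp_sv_def zset_def by simp
  qed
  then have "insert e (B - {c}) \<subseteq> zset Z" using Z(2) unfolding zset_def by auto
  then show False using cl2 Z(1) Zc U(3) by auto
qed

theorem corollary4p3:
  fixes E :: "'e set" and L :: "'e svec set" and g :: 'e
  assumes "affine_om E L g"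
    and "uniform_om E L"
    and "card E > 1"
    and "\<forall>X\<in>Lpp L g. (\<forall>Y\<in>Lpp L g. le_sv X Y \<longrightarrow> Y = X) \<longrightarrow> tope L X"
    and "\<forall>X\<in>Lplus L g. del_sv X g \<noteq> zero_sv"
    and "X \<in> Lplus L g"
  shows "del_sv X g \<in> contraction L g \<longleftrightarrow> X \<notin> Lpp L g"
proof
  assume "del_sv X g \<in> contraction L g"
  then obtain Y where Y: "Y \<in> L" "Y g = Zero" "del_sv X g = del_sv Y g"
    unfolding contraction_def by auto
  have "Y = del_sv X g" using Y unfolding del_sv_def by (metis fun_upd_triv)
  then have "Y \<noteq> zero_sv" "le_sv Y X" using assms(5,6) unfolding le_sv_def del_sv_def by auto
  then show "X \<notin> Lpp L g" using Y unfolding Lpp_def by auto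
next
  assume nX: "X \<notin> Lpp L g"
  have om: "oriented_matroid E L" and gE: "g \<in> E" using assms(1) unfolding affine_om_def by auto
  have XL: "X \<in> L" "X g = Pos" using assms(6) unfolding Lplus_def by auto
  obtain Y where Y: "Y \<in> L" "Y \<noteq> zero_sv" "le_sv Y X" "Y g \<noteq> Pos"
    using nX assms(6) unfolding Lpp_def by auto
  have Yg: "Y g = Zero" using Y(3,4) XL unfolding le_sv_def by metis
  have outE: "\<forall>V\<in>L. \<forall>f. f \<notin> E \<longrightarrow> V f = Zero" using om unfolding oriented_matroid_def by auto
  obtain e where e: "Y e \<noteq> Zero" using Y(2) unfolding zero_sv_def by auto
  have eE: "e \<in> E" using e Y(1) outE by auto
  obtain r B0 where r: "om_basis E L B0" "card B0 = r" "\<forall>B. B \<subseteq> E \<and> card B = r \<longrightarrow> om_basis E L B"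
    using assms(2) unfolding uniform_om_def by auto
  have finE: "finite E" using om unfolding oriented_matroid_def by auto
  have B0E: "B0 \<subseteq> E" using r unfolding om_basis_def om_indep_def by auto
  define Z where "Z = zset Y \<inter> E"
  have finZ: "finite Z" using finE Z_def by auto
  have cardZ: "card Z < r"
  proof (rule ccontr)
    assume "\<not> card Z < r"
    then have "r \<le> card Z" by simp
    then obtain B where "B \<subseteq> Z" "card B = r" by (rule obtain_subset_with_card_n)
    then show False using size_bound[OF om r(3) Y(1) eE e, of B] unfolding Z_def by auto
  qed
  have "card E \<ge> r" using r B0E finE card_mono by blast
  then obtain S where S: "Z \<subseteq> S" "S \<subseteq> E" "card S = r"
  proof -
    have "card (E - Z) \<ge> r - card Z" using finE finZ Z_def
      using card_Diff_subset[of Z E] \<open>r \<le> card E\<close> by simp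
    then obtain T where T: "T \<subseteq> E - Z" "card T = r - card Z" by (rule obtain_subset_with_card_n)
    have "finite T" using T finE finite_subset by blast
    have "card (Z \<union> T) = r" using T finZ \<open>finite T\<close> cardZ
      by (subst card_Un_disjoint) auto
    then show ?thesis using that T Z_def by auto
  qed
  have indZ: "om_indep E L Z"
    using indep_mono[of E L S Z] r(3) S unfolding om_basis_def by auto
  obtain V where V: "V \<in> L" "\<forall>f\<in>Z. V f = del_sv X g f" using realize[OF om indZ] by blast
  have "comp_sv Y V \<in> L" using om Y V unfolding oriented_matroid_def by auto
  moreover have "comp_sv Y V = del_sv X g"
  proof
    fix f
    show "comp_sv Y V f = del_sv X g f"
    proof (cases "Y f = Zero")
      case False
      have fg: "f \<noteq> g" using False Yg by auto
      have "Y f = X f" using Y(3) False unfolding le_sv_def by auto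
      then show ?thesis using False fg unfolding comp_sv_def del_sv_def by simp
    next
      case True
      show ?thesis
      proof (cases "f \<in> E")
        case True
        then show ?thesis using V \<open>Y f = Zero\<close> unfolding Z_def zset_def comp_sv_def by auto
      next
        case False
        have fg: "f \<noteq> g" using False gE by auto
        have "V f = Zero" "X f = Zero" using V(1) XL(1) outE False by auto
        then show ?thesis using \<open>Y f = Zero\<close> fg unfolding comp_sv_def del_sv_def by simp
      qed
    qed
  qed
  ultimately have "del_sv X g \<in> L" by simp
  moreover have "del_sv X g g = Zero" "del_sv (del_sv X g) g = del_sv X g" unfolding del_sv_def by auto
  ultimately show "del_sv X g \<in> contraction L g" unfolding contraction_def by (intro CollectI exI[of _ "del_sv X g"]) simp
qed

end
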